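(* The $t$-harmonic product $\star_t$ makes $\mathfrak{h}^1[t]$ a commutative (associative, unital) $\mathfrak{A}[t]$-algebra, and $S^t$ is an algebra isomorphism from $(\mathfrak{h}^1[t],\star_t)$ onto $(\mathfrak{h}^1[t],* )$; that is, $S^t$ is bijective and $S^t(w_1\star_t w_2)=S^t(w_1)*S^t(w_2)$ for all $w_1,w_2\in\mathfrak{h}^1[t]$.
   Context: Let $\mathfrak{A}$ be a commutative $\mathbb{Q}$-algebra, $A$ a set of letters, and $\mathfrak{h}^1$ the non-commutative polynomial algebra over $\mathfrak{A}$ in the letters of $A$ (the free $\mathfrak{A}$-module on words, i.e. finite sequences of letters including the empty word $1$, with concatenation product). Let $\mathfrak{z}\subset\mathfrak{h}^1$ be the $\mathfrak{A}$-submodule spanned by $A$, and assume $\mathfrak{z}$ carries a commutative associative (not necessarily unital) $\mathfrak{A}$-bilinear product $\circ\colon\mathfrak{z}\times\mathfrak{z}\to\mathfrak{z}$. This is extended to an action of $\mathfrak{z}$ on $\mathfrak{h}^1$ by $a\circ 1=0$ and $a\circ(bw)=(a\circ b)w$ for $a,b\in A$ and words $w$, extended $\mathfrak{A}$-bilinearly. Let $t$ be an indeterminate, $\mathfrak{h}^1[t]=\mathfrak{h}^1\otimes_{\mathbb{Q}}\mathbb{Q}[t]$, with all structures extended $\mathfrak{A}[t]$-linearly. Define the $\mathfrak{A}[t]$-linear operator $S^t$ on $\mathfrak{h}^1[t]$ by $S^t(1)=1$ and $S^t(aw)=aS^t(w)+t\,a\circ S^t(w)$ for $a\in A$ and words $w$.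 The harmonic product $*$ is the $\mathfrak{A}[t]$-bilinear product on $\mathfrak{h}^1[t]$ given by $1*w=w*1=w$ and $(aw)*(bw')=a(w*bw')+b(aw*w')+(a\circ b)(w*w')$ for $a,b\in A$ and words $w,w'$. The $t$-harmonic product $\star_t$ is the $\mathfrak{A}[t]$-bilinear product on $\mathfrak{h}^1[t]$ given by $1\star_t w=w\star_t 1=w$ and $(aw)\star_t(bw')=a(w\star_t bw')+b(aw\star_t w')+(1-2t)(a\circ b)(w\star_t w')+(t^2-t)\,(a\circ b)\circ(w\star_t w')$ for $a,b\in A$ and words $w,w'$ (here $(a\circ b)\circ(\cdot)$ is the action of $\mathfrak{z}$ on $\mathfrak{h}^1$). *)

theory Defs
  imports "HOL-Library.Poly_Mapping" "HOL-Computational_Algebra.Polynomial"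
begin

text \<open>Elements of h^1 (over a coefficient ring 'r) are finitely supported
  functions from words ('a list) to 'r; elements of z are finitely supported
  functions from letters 'a to 'r.  A product on z is given on letters by
  circ a b (an element of z) and extended bilinearly.\<close>

definition smul :: "'r::comm_semiring_1 \<Rightarrow> ('b \<Rightarrow>\<^sub>0 'r) \<Rightarrow> ('b \<Rightarrow>\<^sub>0 'r)" where
  "smul r p = Poly_Mapping.map (\<lambda>c. r * c) p"

definition linext :: "('b \<Rightarrow> ('c \<Rightarrow>\<^sub>0 'r)) \<Rightarrow> ('b \<Rightarrow>\<^sub>0 'r) \<Rightarrow> ('c \<Rightarrow>\<^sub>0 'r::comm_semiring_1)" where
  "linext f x = (\<Sum>v\<in>Poly_Mapping.keys x. smul (Poly_Mapping.lookup x v) (f v))"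

definition bilinext :: "('b \<Rightarrow> 'c \<Rightarrow> ('d \<Rightarrow>\<^sub>0 'r)) \<Rightarrow> ('b \<Rightarrow>\<^sub>0 'r) \<Rightarrow> ('c \<Rightarrow>\<^sub>0 'r)
    \<Rightarrow> ('d \<Rightarrow>\<^sub>0 'r::comm_semiring_1)" where
  "bilinext f x y = (\<Sum>v\<in>Poly_Mapping.keys x. \<Sum>w\<in>Poly_Mapping.keys y. smul (Poly_Mapping.lookup x v * Poly_Mapping.lookup y w) (f v w))"

definition zcat :: "('a \<Rightarrow>\<^sub>0 'r) \<Rightarrow> ('a list \<Rightarrow>\<^sub>0 'r) \<Rightarrow> ('a list \<Rightarrow>\<^sub>0 'r::comm_semiring_1)" where
  "zcat u x = bilinext (\<lambda>a w. Poly_Mapping.single (a # w) 1) u x"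

definition lcons :: "'a \<Rightarrow> ('a list \<Rightarrow>\<^sub>0 'r) \<Rightarrow> ('a list \<Rightarrow>\<^sub>0 'r::comm_semiring_1)" where
  "lcons a x = zcat (Poly_Mapping.single a 1) x"

definition circz :: "('a \<Rightarrow> 'a \<Rightarrow> ('a \<Rightarrow>\<^sub>0 'r)) \<Rightarrow> ('a \<Rightarrow>\<^sub>0 'r) \<Rightarrow> ('a \<Rightarrow>\<^sub>0 'r)
    \<Rightarrow> ('a \<Rightarrow>\<^sub>0 'r::comm_semiring_1)" where
  "circz circ u v = bilinext circ u v"

definition zact :: "('a \<Rightarrow> 'a \<Rightarrow> ('a \<Rightarrow>\<^sub>0 'r)) \<Rightarrow> ('a \<Rightarrow>\<^sub>0 'r) \<Rightarrow> ('a list \<Rightarrow>\<^sub>0 'r)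
    \<Rightarrow> ('a list \<Rightarrow>\<^sub>0 'r::comm_semiring_1)" where
  "zact circ u x = linext (\<lambda>w. case w of [] \<Rightarrow> 0
     | b # w' \<Rightarrow> zcat (circz circ u (Poly_Mapping.single b 1)) (Poly_Mapping.single w' 1)) x"

function hprod_w :: "('a \<Rightarrow> 'a \<Rightarrow> ('a \<Rightarrow>\<^sub>0 'r)) \<Rightarrow> 'a list \<Rightarrow> 'a list
    \<Rightarrow> ('a list \<Rightarrow>\<^sub>0 'r::comm_semiring_1)" where
  "hprod_w circ [] v = Poly_Mapping.single v 1"
| "hprod_w circ (a # u) [] = Poly_Mapping.single (a # u) 1"
| "hprod_w circ (a # u) (b # v) =
     lcons a (hprod_w circ u (b # v)) + lcons b (hprod_w circ (a # u) v)
     + zcat (circ a b) (hprod_w circ u v)"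
  by pat_completeness auto
termination by (relation "measure (\<lambda>(c, u, v). length u + length v)") auto

definition harm :: "('a \<Rightarrow> 'a \<Rightarrow> ('a \<Rightarrow>\<^sub>0 'r)) \<Rightarrow> ('a list \<Rightarrow>\<^sub>0 'r) \<Rightarrow> ('a list \<Rightarrow>\<^sub>0 'r)
    \<Rightarrow> ('a list \<Rightarrow>\<^sub>0 'r::comm_semiring_1)" where
  "harm circ x y = bilinext (hprod_w circ) x y"

function tprod_w :: "('a \<Rightarrow> 'a \<Rightarrow> ('a \<Rightarrow>\<^sub>0 'r)) \<Rightarrow> 'r \<Rightarrow> 'a list \<Rightarrow> 'a list
    \<Rightarrow> ('a list \<Rightarrow>\<^sub>0 'r::comm_ring_1)" where
  "tprod_w circ t [] v = Poly_Mapping.single v 1"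
| "tprod_w circ t (a # u) [] = Poly_Mapping.single (a # u) 1"
| "tprod_w circ t (a # u) (b # v) =
     lcons a (tprod_w circ t u (b # v)) + lcons b (tprod_w circ t (a # u) v)
     + smul (1 - 2 * t) (zcat (circ a b) (tprod_w circ t u v))
     + smul (t ^ 2 - t) (zact circ (circ a b) (tprod_w circ t u v))"
  by pat_completeness auto
termination by (relation "measure (\<lambda>(c, t, u, v). length u + length v)") auto

definition tharm :: "('a \<Rightarrow> 'a \<Rightarrow> ('a \<Rightarrow>\<^sub>0 'r)) \<Rightarrow> 'r \<Rightarrow> ('a list \<Rightarrow>\<^sub>0 'r) \<Rightarrow> ('a list \<Rightarrow>\<^sub>0 'r)
    \<Rightarrow> ('a list \<Rightarrow>\<^sub>0 'r::comm_ring_1)" where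
  "tharm circ t x y = bilinext (tprod_w circ t) x y"

fun St_w :: "('a \<Rightarrow> 'a \<Rightarrow> ('a \<Rightarrow>\<^sub>0 'r)) \<Rightarrow> 'r \<Rightarrow> 'a list \<Rightarrow> ('a list \<Rightarrow>\<^sub>0 'r::comm_semiring_1)" where
  "St_w circ t [] = Poly_Mapping.single [] 1"
| "St_w circ t (a # w) =
     lcons a (St_w circ t w) + smul t (zact circ (Poly_Mapping.single a 1) (St_w circ t w))"

definition St :: "('a \<Rightarrow> 'a \<Rightarrow> ('a \<Rightarrow>\<^sub>0 'r)) \<Rightarrow> 'r \<Rightarrow> ('a list \<Rightarrow>\<^sub>0 'r) \<Rightarrow> ('a list \<Rightarrow>\<^sub>0 'r::comm_semiring_1)" where
  "St circ t x = linext (St_w circ t) x"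

definition liftc :: "('a \<Rightarrow> 'a \<Rightarrow> ('a \<Rightarrow>\<^sub>0 'k::comm_ring_1)) \<Rightarrow> 'a \<Rightarrow> 'a \<Rightarrow> ('a \<Rightarrow>\<^sub>0 'k poly)" where
  "liftc circ a b = Poly_Mapping.map (\<lambda>c. [:c:]) (circ a b)"

end

theory Submission
  imports Defs
begin

abbreviation pm_single where "pm_single \<equiv> Poly_Mapping.single"
abbreviation pm_lookup where "pm_lookup \<equiv> Poly_Mapping.lookup"
abbreviation pm_keys where "pm_keys \<equiv> Poly_Mapping.keys"

lemma lookup_smul[simp]: "pm_lookup (smul r p) k = r * pm_lookup p k"
  by (simp add: smul_def Poly_Mapping.map.rep_eq when_def)

lemma smul_add_right[simp]: "smul r (p + q) = smul r p + smul r q"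
  by (rule poly_mapping_eqI) (simp add: lookup_add algebra_simps)
lemma smul_add_left: "smul (r + s) p = smul r p + smul s p"
  by (rule poly_mapping_eqI) (simp add: lookup_add algebra_simps)
lemma smul_smul[simp]: "smul r (smul s p) = smul (r*s) p"
  by (rule poly_mapping_eqI) (simp add: algebra_simps)
lemma smul_one[simp]: "smul 1 p = p"
  by (rule poly_mapping_eqI) simp
lemma smul_zero_left[simp]: "smul 0 p = 0"
  by (rule poly_mapping_eqI) simp
lemma smul_zero_right[simp]: "smul r 0 = 0"
  by (rule poly_mapping_eqI) simp
lemma smul_sum: "smul r (sum f S) = (\<Sum>x\<in>S. smul r (f x))"
  by (rule poly_mapping_eqI) (simp add: lookup_sum sum_distrib_left)
lemma smul_diff_right[simp]: "smul (r::'r::comm_ring_1) (p - q) = smul r p - smul r q"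
  by (rule poly_mapping_eqI) (simp add: lookup_minus algebra_simps)
lemma smul_uminus_right[simp]: "smul (r::'r::comm_ring_1) (- p) = - smul r p"
  by (rule poly_mapping_eqI) (simp add: algebra_simps)
lemma smul_single: "smul r (pm_single k c) = pm_single k (r*c)"
  by (rule poly_mapping_eqI) (simp add: lookup_single when_def)
lemma keys_smul: "pm_keys (smul r p) \<subseteq> pm_keys p"
  by (auto simp: in_keys_iff)

lemma linext_superset:
  assumes "finite S" "pm_keys x \<subseteq> S"
  shows "linext f x = (\<Sum>v\<in>S. smul (pm_lookup x v) (f v))"
  unfolding linext_def
  by (rule sum.mono_neutral_left) (auto simp: assms in_keys_iff)

lemma linext_zero[simp]: "linext f 0 = 0"
  by (simp add: linext_def)

lemma linext_add[simp]: "linext f (x + y) = linext f x + linext f y"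
proof -
  let ?S = "pm_keys x \<union> pm_keys y"
  have "linext f (x+y) = (\<Sum>v\<in>?S. smul (pm_lookup (x+y) v) (f v))"
    by (rule linext_superset) (auto simp: keys_add[of x y])
  also have "\<dots> = (\<Sum>v\<in>?S. smul (pm_lookup x v) (f v)) + (\<Sum>v\<in>?S. smul (pm_lookup y v) (f v))"
    by (simp add: lookup_add smul_add_left sum.distrib)
  also have "\<dots> = linext f x + linext f y"
    by (simp add: linext_superset[of ?S x] linext_superset[of ?S y])
  finally show ?thesis .
qed

lemma linext_smul[simp]: "linext f (smul r x) = smul r (linext f x)"
proof -
  have "linext f (smul r x) = (\<Sum>v\<in>pm_keys x. smul (pm_lookup (smul r x) v) (f v))"
    by (rule linext_superset) (auto simp: keys_smul)
  then show ?thesis by (simp add: linext_def smul_sum)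
qed

lemma linext_single[simp]: "linext f (pm_single k c) = smul c (f k)"
proof -
  have "linext f (pm_single k c) = (\<Sum>v\<in>{k}. smul (pm_lookup (pm_single k c) v) (f v))"
    by (rule linext_superset) auto
  then show ?thesis by simp
qed

lemma linext_fun_add: "linext (\<lambda>v. f v + g v) x = linext f x + linext g x"
  by (simp add: linext_def sum.distrib)
lemma linext_fun_smul: "linext (\<lambda>v. smul r (f v)) x = smul r (linext f x)"
  by (simp add: linext_def smul_sum mult.commute)
lemma linext_fun_zero: "linext (\<lambda>v. 0) x = 0"
  by (simp add: linext_def)

lemma linext_single_id: "linext (\<lambda>k. pm_single k 1) x = x"
proof (rule poly_mapping_eqI)
  fix j
  have "pm_lookup (linext (\<lambda>k. pm_single k 1) x) j
     = (\<Sum>k\<in>pm_keys x. pm_lookup x k * (if k = j then 1 else 0))"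
    by (simp add: linext_def lookup_sum lookup_single when_def)
  also have "\<dots> = pm_lookup x j"
    by (simp add: if_distrib sum.delta in_keys_iff cong: if_cong)
  finally show "pm_lookup (linext (\<lambda>k. pm_single k 1) x) j = pm_lookup x j" .
qed

lemma pm_induct[case_names zero add smul single]:
  assumes z: "P 0" and a: "\<And>p q. P p \<Longrightarrow> P q \<Longrightarrow> P (p+q)"
    and s: "\<And>c p. P p \<Longrightarrow> P (smul c p)" and k: "\<And>k. P (pm_single k 1)"
  shows "P x"
proof -
  have "P (\<Sum>k\<in>S. smul (pm_lookup x k) (pm_single k 1))" if "finite S" for S
    using that by (induct rule: finite_induct) (auto intro: z a s k)
  then have "P (linext (\<lambda>k. pm_single k 1) x)" by (simp add: linext_def)
  then show ?thesis by (simp add: linext_single_id)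
qed

lemma bilinext_alt: "bilinext f x y = linext (\<lambda>v. linext (f v) y) x"
  unfolding bilinext_def linext_def by (simp add: smul_sum)

lemma bilinext_alt2: "bilinext f x y = linext (\<lambda>w. linext (\<lambda>v. f v w) x) y"
  unfolding bilinext_def linext_def by (subst sum.swap) (simp add: smul_sum mult.commute)

lemma bilinext_add1[simp]: "bilinext f (x + x') y = bilinext f x y + bilinext f x' y"
  by (simp add: bilinext_alt)
lemma bilinext_smul1[simp]: "bilinext f (smul r x) y = smul r (bilinext f x y)"
  by (simp add: bilinext_alt)
lemma bilinext_zero1[simp]: "bilinext f 0 y = 0"
  by (simp add: bilinext_alt)
lemma bilinext_add2[simp]: "bilinext f x (y + y') = bilinext f x y + bilinext f x y'"
  by (simp add: bilinext_alt2)
lemma bilinext_smul2[simp]: "bilinext f x (smul r y) = smul r (bilinext f x y)"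
  by (simp add: bilinext_alt2)
lemma bilinext_zero2[simp]: "bilinext f x 0 = 0"
  by (simp add: bilinext_alt2)
lemma bilinext_single[simp]: "bilinext f (pm_single a c) (pm_single b d) = smul (c*d) (f a b)"
  by (simp add: bilinext_alt)


lemma zcat_add1[simp]: "zcat (u + u') x = zcat u x + zcat u' x" by (simp add: zcat_def)
lemma zcat_add2[simp]: "zcat u (x + x') = zcat u x + zcat u x'" by (simp add: zcat_def)
lemma zcat_smul1[simp]: "zcat (smul r u) x = smul r (zcat u x)" by (simp add: zcat_def)
lemma zcat_smul2[simp]: "zcat u (smul r x) = smul r (zcat u x)" by (simp add: zcat_def)
lemma zcat_zero1[simp]: "zcat 0 x = 0" by (simp add: zcat_def)
lemma zcat_zero2[simp]: "zcat u 0 = 0" by (simp add: zcat_def)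
lemma zcat_single: "zcat (pm_single a c) (pm_single w d) = pm_single (a#w) (c*d)"
  by (simp add: zcat_def smul_single)

lemma circz_add1[simp]: "circz circ (u + u') x = circz circ u x + circz circ u' x" by (simp add: circz_def)
lemma circz_add2[simp]: "circz circ u (x + x') = circz circ u x + circz circ u x'" by (simp add: circz_def)
lemma circz_smul1[simp]: "circz circ (smul r u) x = smul r (circz circ u x)" by (simp add: circz_def)
lemma circz_smul2[simp]: "circz circ u (smul r x) = smul r (circz circ u x)" by (simp add: circz_def)
lemma circz_zero1[simp]: "circz circ 0 x = 0" by (simp add: circz_def)
lemma circz_zero2[simp]: "circz circ u 0 = 0" by (simp add: circz_def)
lemma circz_single[simp]: "circz circ (pm_single a 1) (pm_single b 1) = circ a b"
  by (simp add: circz_def)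

lemma zact_add2[simp]: "zact circ u (x + x') = zact circ u x + zact circ u x'" by (simp add: zact_def)
lemma zact_smul2[simp]: "zact circ u (smul r x) = smul r (zact circ u x)" by (simp add: zact_def)
lemma zact_zero2[simp]: "zact circ u 0 = 0" by (simp add: zact_def)

lemma zact_add1[simp]: "zact circ (u + u') x = zact circ u x + zact circ u' x"
  unfolding zact_def linext_fun_add[symmetric]
  by (intro arg_cong[where f="\<lambda>f. linext f x"] ext) (simp split: list.split)
lemma zact_smul1[simp]: "zact circ (smul r u) x = smul r (zact circ u x)"
  unfolding zact_def linext_fun_smul[symmetric]
  by (intro arg_cong[where f="\<lambda>f. linext f x"] ext) (simp split: list.split)
lemma zact_zero1[simp]: "zact circ 0 x = 0"
  using zact_smul1[of circ 0 0 x] by simp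

lemma zact_nil[simp]: "zact circ u (pm_single [] c) = 0"
  by (simp add: zact_def)
lemma zact_cons: "zact circ u (pm_single (b#w) c) = smul c (zcat (circz circ u (pm_single b 1)) (pm_single w 1))"
  by (simp add: zact_def)

lemma zact_zcat: "zact circ u (zcat v x) = zcat (circz circ u v) x"
proof (induct x rule: pm_induct)
  case (single w)
  show ?case
  proof (induct v rule: pm_induct)
    case (single b)
    then show ?case by (simp add: zcat_single zact_cons)
  qed simp_all
qed simp_all

locale qs =
  fixes circ :: "'a \<Rightarrow> 'a \<Rightarrow> ('a \<Rightarrow>\<^sub>0 'r::comm_ring_1)"
  assumes comm: "\<And>a b. circ a b = circ b a"
    and assoc: "\<And>a b c. circz circ (circ a b) (Poly_Mapping.single c 1)
                              = circz circ (Poly_Mapping.single a 1) (circ b c)"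
begin

lemma circz_comm: "circz circ u v = circz circ v u"
proof (induct u rule: pm_induct)
  case (single a)
  show ?case
    by (induct v rule: pm_induct) (simp_all add: comm)
qed simp_all

lemma circz_assoc: "circz circ (circz circ u v) w = circz circ u (circz circ v w)"
proof (induct u rule: pm_induct)
  case (single a)
  show ?case
  proof (induct v rule: pm_induct)
    case (single b)
    show ?case
      by (induct w rule: pm_induct) (simp_all add: assoc)
  qed simp_all
qed simp_all

lemma zact_zact: "zact circ u (zact circ v x) = zact circ (circz circ u v) x"
proof (induct x rule: pm_induct)
  case (single w)
  show ?case
    by (cases w) (simp_all add: zact_cons zact_zcat circz_assoc)
qed simp_all

end


lemma harm_add1[simp]: "harm circ (u + u') x = harm circ u x + harm circ u' x" by (simp add: harm_def)
lemma harm_add2[simp]: "harm circ u (x + x') = harm circ u x + harm circ u x'" by (simp add: harm_def)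
lemma harm_smul1[simp]: "harm circ (smul r u) x = smul r (harm circ u x)" by (simp add: harm_def)
lemma harm_smul2[simp]: "harm circ u (smul r x) = smul r (harm circ u x)" by (simp add: harm_def)
lemma harm_zero1[simp]: "harm circ 0 x = 0" by (simp add: harm_def)
lemma harm_zero2[simp]: "harm circ u 0 = 0" by (simp add: harm_def)
lemma harm_single: "harm circ (pm_single x 1) (pm_single y 1) = hprod_w circ x y"
  by (simp add: harm_def)

lemma harm_rec: "harm circ (zcat u P) (zcat v Q) = zcat u (harm circ P (zcat v Q))
   + zcat v (harm circ (zcat u P) Q) + zcat (circz circ u v) (harm circ P Q)"
proof (induct u rule: pm_induct)
  case (single a)
  show ?case
  proof (induct v rule: pm_induct)
    case (single b)
    show ?case
    proof (induct P rule: pm_induct)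
      case (single x)
      show ?case
      proof (induct Q rule: pm_induct)
        case (single y)
        show ?case by (simp add: zcat_single harm_single lcons_def)
      qed (simp_all add: add_ac)
    qed (simp_all add: add_ac)
  qed (simp_all add: add_ac)
qed (simp_all add: add_ac)

lemma harm_unit1[simp]: "harm circ (pm_single [] 1) x = x"
  by (induct x rule: pm_induct) (simp_all add: harm_single)

lemma harm_unit2[simp]: "harm circ x (pm_single [] 1) = x"
proof (induct x rule: pm_induct)
  case (single w) then show ?case by (cases w) (simp_all add: harm_single)
qed simp_all

context qs begin

lemma hprod_comm0: "c = circ \<Longrightarrow> hprod_w c u v = hprod_w c v u"
proof (induct c u v rule: hprod_w.induct)
  case (1 c v) then show ?case by (cases v) simp_all
qed (simp_all add: comm add_ac)

lemma hprod_comm: "hprod_w circ u v = hprod_w circ v u"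
  by (rule hprod_comm0) simp

lemma harm_comm: "harm circ x y = harm circ y x"
proof (induct x rule: pm_induct)
  case (single u)
  show ?case by (induct y rule: pm_induct) (simp_all add: harm_single hprod_comm)
qed simp_all

abbreviation E where "E w \<equiv> pm_single w 1"
abbreviation h where "h \<equiv> harm circ"

lemma hassoc_words: "h (h (E x) (E y)) (E z) = h (E x) (h (E y) (E z))"
proof (induct "length x + length y + length z" arbitrary: x y z rule: less_induct)
  case less
  show ?case
  proof (cases "x = [] \<or> y = [] \<or> z = []")
    case True then show ?thesis by auto
  next
    case False
    then obtain a x' b y' c z' where xyz: "x = a#x'" "y = b#y'" "z = c#z'"
      by (meson neq_Nil_conv)
    let ?A = "E a" and ?B = "E b" and ?C = "E c" and ?X = "E x'" and ?Y = "E y'" and ?Z = "E z'"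
    have ex: "E x = zcat ?A ?X" "E y = zcat ?B ?Y" "E z = zcat ?C ?Z"
      by (simp_all add: xyz zcat_single)
    have I1: "h (h ?X (zcat ?B ?Y)) (zcat ?C ?Z) = h ?X (h (zcat ?B ?Y) (zcat ?C ?Z))"
      using less(1)[of x' "b#y'" "c#z'"] by (simp add: xyz zcat_single)
    have I2: "h (h ?X (zcat ?B ?Y)) ?Z = h ?X (h (zcat ?B ?Y) ?Z)"
      using less(1)[of x' "b#y'" "z'"] by (simp add: xyz zcat_single)
    have I3: "h (h (zcat ?A ?X) ?Y) (zcat ?C ?Z) = h (zcat ?A ?X) (h ?Y (zcat ?C ?Z))"
      using less(1)[of "a#x'" "y'" "c#z'"] by (simp add: xyz zcat_single)
    have I4: "h (h (zcat ?A ?X) ?Y) ?Z = h (zcat ?A ?X) (h ?Y ?Z)"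
      using less(1)[of "a#x'" "y'" "z'"] by (simp add: xyz zcat_single)
    have I5: "h (h ?X ?Y) (zcat ?C ?Z) = h ?X (h ?Y (zcat ?C ?Z))"
      using less(1)[of "x'" "y'" "c#z'"] by (simp add: xyz zcat_single)
    have I6: "h (h ?X ?Y) ?Z = h ?X (h ?Y ?Z)"
      using less(1)[of "x'" "y'" "z'"] by (simp add: xyz zcat_single)
    have I7: "h (h (zcat ?A ?X) (zcat ?B ?Y)) ?Z = h (zcat ?A ?X) (h (zcat ?B ?Y) ?Z)"
      using less(1)[of "a#x'" "b#y'" "z'"] by (simp add: xyz zcat_single)
    have G: "h (zcat ?A ?X) (h (zcat ?B ?Y) ?Z) = h (zcat ?A (h ?X (zcat ?B ?Y))) ?Z
       + h (zcat ?B (h (zcat ?A ?X) ?Y)) ?Z + h (zcat (circ a b) (h ?X ?Y)) ?Z"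
      by (simp add: I7[symmetric] harm_rec)
    show ?thesis unfolding ex
      by (simp add: harm_rec I1 I2 I3 I4 I5 I6 G assoc add_ac)
  qed
qed

lemma harm_assoc: "h (h x y) z = h x (h y z)"
proof (induct x rule: pm_induct)
  case (single u)
  show ?case
  proof (induct y rule: pm_induct)
    case (single v)
    show ?case
      by (induct z rule: pm_induct) (simp_all add: hassoc_words)
  qed simp_all
qed simp_all

end


lemma additive_diff:
  fixes f :: "'b::ab_group_add \<Rightarrow> 'c::ab_group_add"
  assumes "\<And>x y. f (x + y) = f x + f y"
  shows "f (x - y) = f x - f y"
proof -
  have "f x = f ((x - y) + y)" by simp
  also have "\<dots> = f (x - y) + f y" by (rule assms)
  finally show ?thesis by (simp add: algebra_simps)
qed

lemma zcat_diff2[simp]: "zcat u (x - (y::'a list \<Rightarrow>\<^sub>0 'r::comm_ring_1)) = zcat u x - zcat u y"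
  by (rule additive_diff) simp
lemma zact_diff2[simp]: "zact circ u (x - (y::'a list \<Rightarrow>\<^sub>0 'r::comm_ring_1)) = zact circ u x - zact circ u y"
  by (rule additive_diff) simp
lemma harm_diff2[simp]: "harm circ u (x - (y::'a list \<Rightarrow>\<^sub>0 'r::comm_ring_1)) = harm circ u x - harm circ u y"
  by (rule additive_diff) simp
lemma harm_diff1[simp]: "harm circ (x - (y::'a list \<Rightarrow>\<^sub>0 'r::comm_ring_1)) u = harm circ x u - harm circ y u"
  by (rule additive_diff[where f="\<lambda>x. harm circ x u"]) simp

lemma smul_neg: "smul (- r) x = - smul (r::'r::comm_ring_1) x"
  by (rule poly_mapping_eqI) simp

lemma St_add[simp]: "St circ t (x + y) = St circ t x + St circ t y" by (simp add: St_def)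
lemma St_smul[simp]: "St circ t (smul r x) = smul r (St circ t x)" by (simp add: St_def)
lemma St_zero[simp]: "St circ t 0 = 0" by (simp add: St_def)
lemma St_single: "St circ t (pm_single w 1) = St_w circ t w" by (simp add: St_def)

lemma St_zcat: "St circ t (zcat u P) = zcat u (St circ t P) + smul t (zact circ u (St circ t P))"
proof (induct u rule: pm_induct)
  case (single a)
  show ?case
  proof (induct P rule: pm_induct)
    case (single w)
    show ?case by (simp add: zcat_single St_single lcons_def)
  qed (simp_all add: add_ac mult.commute)
qed (simp_all add: add_ac mult.commute)

context qs begin

lemma circz_lcomm: "circz circ u (circz circ v w) = circz circ v (circz circ u w)"
  by (metis circz_assoc circz_comm)

lemma St_zact: "St circ t (zact circ u P) = zact circ u (St circ t P)"
proof (induct P rule: pm_induct)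
  case (single w)
  show ?case
  proof (cases w)
    case Nil then show ?thesis by (simp add: St_single)
  next
    case (Cons b w')
    then show ?thesis
      by (simp add: St_single zact_cons St_zcat lcons_def zact_zcat zact_zact)
  qed
qed simp_all

lemma St_inv_words: "St circ (- t) (St_w circ t w) = pm_single w 1"
proof (induct w)
  case Nil then show ?case by (simp add: St_single)
next
  case (Cons a w)
  then show ?case by (simp add: lcons_def St_zcat St_zact smul_neg zcat_single)
qed

lemma St_inv: "St circ (- t) (St circ t x) = x"
  by (induct x rule: pm_induct) (simp_all add: St_single St_inv_words)

lemma St_bij: "bij (St circ t)"
proof -
  have 1: "St circ (- t) (St circ t x) = x" for x by (rule St_inv)
  have 2: "St circ t (St circ (- t) x) = x" for x using St_inv[of "- t" x] by simp
  show ?thesis unfolding bij_def inj_def surj_def using 1 2 by metis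
qed

end


context qs begin

lemma I1a: "h (zcat A X) (zact circ B Y) + zcat (circz circ A B) (h X Y)
  = zcat A (h X (zact circ B Y)) + zact circ B (h (zcat A X) Y)"
proof (induct Y rule: pm_induct)
  case (single y)
  show ?case
  proof (cases y)
    case Nil then show ?thesis by (simp add: zact_zcat circz_comm)
  next
    case (Cons d y')
    have e: "pm_single y 1 = zcat (E d) (E y')" by (simp add: Cons zcat_single)
    show ?thesis unfolding e
      by (simp add: harm_rec zact_zcat circz_assoc circz_comm circz_lcomm add_ac)
  qed
qed (simp_all add: add_ac, metis smul_add_right add.commute)

lemma I1b: "h (zact circ A X) (zcat B Y) + zcat (circz circ A B) (h X Y)
  = zcat B (h (zact circ A X) Y) + zact circ A (h X (zcat B Y))"
  by (metis I1a harm_comm circz_comm add.commute)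

lemma I2: "h (zact circ A X) (zact circ B Y) + zact circ (circz circ A B) (h X Y)
  = zact circ A (h X (zact circ B Y)) + zact circ B (h (zact circ A X) Y)"
proof (induct X rule: pm_induct)
  case (single x)
  show ?case
  proof (induct Y rule: pm_induct)
    case (single y)
    show ?case
    proof (cases x)
      case Nil then show ?thesis by (simp add: zact_zact)
    next
      case (Cons c x')
      have ex: "pm_single x 1 = zcat (E c) (E x')" by (simp add: Cons zcat_single)
      show ?thesis
      proof (cases y)
        case Nil then show ?thesis by (simp add: zact_zact circz_comm)
      next
        case (Cons d y')
        have ey: "pm_single y 1 = zcat (E d) (E y')" by (simp add: Cons zcat_single)
        show ?thesis unfolding ex ey
          by (simp add: harm_rec zact_zcat circz_assoc circz_comm circz_lcomm add_ac)
      qed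
    qed
  qed (simp_all add: add_ac, metis smul_add_right add.commute)
qed (simp_all add: add_ac, metis smul_add_right add.commute)

lemma hom_step:
  fixes X Y :: "'a list \<Rightarrow>\<^sub>0 'r" and a b :: 'a
  defines "A \<equiv> E a" and "B \<equiv> E b"
  shows "zcat A (h X (zcat B Y + smul t (zact circ B Y)))
     + smul t (zact circ A (h X (zcat B Y + smul t (zact circ B Y))))
     + (zcat B (h (zcat A X + smul t (zact circ A X)) Y)
     + smul t (zact circ B (h (zcat A X + smul t (zact circ A X)) Y)))
     + smul (1 - 2 * t) (zcat (circ a b) (h X Y) + smul t (zact circ (circ a b) (h X Y)))
     + smul (t^2 - t) (zact circ (circ a b) (h X Y))
   = h (zcat A X + smul t (zact circ A X)) (zcat B Y + smul t (zact circ B Y))"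
proof -
  have e1: "h (zcat A X) (zact circ B Y) = zcat A (h X (zact circ B Y)) + zact circ B (h (zcat A X) Y)
     - zcat (circ a b) (h X Y)"
    using I1a[of A X B Y] by (simp add: A_def B_def algebra_simps)
  have e2: "h (zact circ A X) (zcat B Y) = zcat B (h (zact circ A X) Y) + zact circ A (h X (zcat B Y))
     - zcat (circ a b) (h X Y)"
    using I1b[of A X B Y] by (simp add: A_def B_def algebra_simps)
  have e3: "h (zact circ A X) (zact circ B Y) = zact circ A (h X (zact circ B Y)) + zact circ B (h (zact circ A X) Y)
     - zact circ (circ a b) (h X Y)"
    using I2[of A X B Y] by (simp add: A_def B_def algebra_simps)
  have e0: "h (zcat A X) (zcat B Y) = zcat A (h X (zcat B Y)) + zcat B (h (zcat A X) Y) + zcat (circ a b) (h X Y)"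
    by (simp add: harm_rec A_def B_def)
  show ?thesis
    apply (rule poly_mapping_eqI)
    apply (simp only: harm_add1 harm_add2 harm_smul1 harm_smul2 e0 e1 e2 e3 zcat_add2 zcat_smul2 zact_add2 zact_smul2
       zcat_diff2 zact_diff2 smul_add_right smul_diff_right smul_smul lookup_add lookup_minus lookup_smul)
    apply (simp add: algebra_simps power2_eq_square)
    done
qed

end


lemma tharm_add1[simp]: "tharm circ t (u + u') x = tharm circ t u x + tharm circ t u' x" by (simp add: tharm_def)
lemma tharm_add2[simp]: "tharm circ t u (x + x') = tharm circ t u x + tharm circ t u x'" by (simp add: tharm_def)
lemma tharm_smul1[simp]: "tharm circ t (smul r u) x = smul r (tharm circ t u x)" by (simp add: tharm_def)
lemma tharm_smul2[simp]: "tharm circ t u (smul r x) = smul r (tharm circ t u x)" by (simp add: tharm_def)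
lemma tharm_zero1[simp]: "tharm circ t 0 x = 0" by (simp add: tharm_def)
lemma tharm_zero2[simp]: "tharm circ t u 0 = 0" by (simp add: tharm_def)
lemma tharm_single: "tharm circ t (pm_single x 1) (pm_single y 1) = tprod_w circ t x y"
  by (simp add: tharm_def)

lemma tharm_unit: "tharm circ t (pm_single [] 1) x = x"
  by (induct x rule: pm_induct) (simp_all add: tharm_single)

context qs begin

lemma hom_words0: "c = circ \<Longrightarrow> St circ t (tprod_w c t u v) = h (St_w circ t u) (St_w circ t v)"
proof (induct c t u v rule: tprod_w.induct)
  case (1 c t v) then show ?case by (simp add: St_single)
next
  case (2 c t a u) then show ?case by (simp add: St_single del: St_w.simps(2))
next
  case (3 c t a u b v)
  show ?case
    using hom_step[where X="St_w circ t u" and a=a and b=b and t=t and Y="St_w circ t v"] 3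
    by (simp add: St_zcat St_zact lcons_def)
qed

lemma hom: "St circ t (tharm circ t x y) = h (St circ t x) (St circ t y)"
proof (induct x rule: pm_induct)
  case (single u)
  show ?case
    by (induct y rule: pm_induct) (simp_all add: tharm_single St_single hom_words0)
qed simp_all

lemma tharm_comm: "tharm circ t x y = tharm circ t y x"
  by (metis hom harm_comm St_inv)

lemma tharm_assoc: "tharm circ t (tharm circ t x y) z = tharm circ t x (tharm circ t y z)"
  by (metis hom harm_assoc St_inv)

end


abbreviation mp :: "('a \<Rightarrow>\<^sub>0 'k::comm_ring_1) \<Rightarrow> ('a \<Rightarrow>\<^sub>0 'k poly)" where
  "mp \<equiv> Poly_Mapping.map (\<lambda>c. [:c:])"

lemma lookup_mp: "pm_lookup (mp p) k = [:pm_lookup p k:]"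
  by (simp add: Poly_Mapping.map.rep_eq when_def)

lemma mp_add: "mp (p + q) = mp p + mp q"
  by (rule poly_mapping_eqI) (simp add: lookup_mp lookup_add)
lemma mp_smul: "mp (smul r p) = smul [:r:] (mp p)"
  by (rule poly_mapping_eqI) (simp add: lookup_mp)
lemma mp_zero: "mp 0 = 0"
  by (rule poly_mapping_eqI) (simp add: lookup_mp)
lemma mp_single: "mp (pm_single a 1) = pm_single a 1"
  by (rule poly_mapping_eqI) (simp add: lookup_mp lookup_single when_def)

lemma circz_lift: "circz (liftc circ) (mp u) (mp v) = mp (circz circ u v)"
proof (induct u rule: pm_induct)
  case (single a)
  show ?case
    by (induct v rule: pm_induct) (simp_all add: mp_add mp_smul mp_zero mp_single liftc_def)
qed (simp_all add: mp_add mp_smul mp_zero)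

theorem theorem3p5:
  fixes circ :: "'a \<Rightarrow> 'a \<Rightarrow> ('a \<Rightarrow>\<^sub>0 'k::comm_ring_1)"
  assumes Qalg: "\<And>n::nat. n > 0 \<Longrightarrow> \<exists>x::'k. of_nat n * x = 1"
    and circ_comm: "\<And>a b. circ a b = circ b a"
    and circ_assoc: "\<And>a b c. circz circ (circ a b) (Poly_Mapping.single c 1)
                              = circz circ (Poly_Mapping.single a 1) (circ b c)"
  defines "T \<equiv> [:0, 1:] :: 'k poly"
  shows "(\<forall>r x y z. tharm (liftc circ) T (smul r x + y) z
                      = smul r (tharm (liftc circ) T x z) + tharm (liftc circ) T y z)
       \<and> (\<forall>x y. tharm (liftc circ) T x y = tharm (liftc circ) T y x)
       \<and> (\<forall>x y z. tharm (liftc circ) T (tharm (liftc circ) T x y) z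
                 = tharm (liftc circ) T x (tharm (liftc circ) T y z))
       \<and> (\<forall>x. tharm (liftc circ) T (Poly_Mapping.single [] 1) x = x)
       \<and> bij (St (liftc circ) T)
       \<and> (\<forall>x y. St (liftc circ) T (tharm (liftc circ) T x y)
                 = harm (liftc circ) (St (liftc circ) T x) (St (liftc circ) T y))"
proof -
  interpret L: qs "liftc circ"
  proof
    fix a b c
    show "liftc circ a b = liftc circ b a" by (simp add: liftc_def circ_comm)
    have "circz (liftc circ) (liftc circ a b) (pm_single c 1)
        = mp (circz circ (circ a b) (pm_single c 1))"
      using circz_lift[of circ "circ a b" "pm_single c 1"] by (simp add: liftc_def mp_single)
    also have "\<dots> = mp (circz circ (pm_single a 1) (circ b c))" by (simp add: circ_assoc)
    also have "\<dots> = circz (liftc circ) (pm_single a 1) (liftc circ b c)"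
      using circz_lift[of circ "pm_single a 1" "circ b c"] by (simp add: liftc_def mp_single)
    finally show "circz (liftc circ) (liftc circ a b) (pm_single c 1)
        = circz (liftc circ) (pm_single a 1) (liftc circ b c)" .
  qed
  show ?thesis
  proof (intro conjI allI)
    fix x y z
    show "tharm (liftc circ) T x y = tharm (liftc circ) T y x" by (rule L.tharm_comm)
    show "tharm (liftc circ) T (tharm (liftc circ) T x y) z
                 = tharm (liftc circ) T x (tharm (liftc circ) T y z)" by (rule L.tharm_assoc)
    show "tharm (liftc circ) T (pm_single [] 1) x = x" by (rule tharm_unit)
    show "St (liftc circ) T (tharm (liftc circ) T x y)
                 = harm (liftc circ) (St (liftc circ) T x) (St (liftc circ) T y)" by (rule L.hom)
  next
    show "bij (St (liftc circ) T)" by (rule L.St_bij)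
  next
    fix r x y z
    show "tharm (liftc circ) T (smul r x + y) z
                      = smul r (tharm (liftc circ) T x z) + tharm (liftc circ) T y z" by simp
  qed
qed

end
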